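(* Let $\mathcal D=(A,D)$ be a dependence alphabet and $\mathcal L\subseteq\mathbb M(\mathcal D)$ rational. Then there are a dependence alphabet $\mathcal D'=(A',D')$ with $A\subseteq A'$ and $D=D'\cap(A\times A)$, a trace-pushdown system $\mathcal P=(Q,\Delta)$ over $\mathcal D'$, a configuration $c$ of $\mathcal P$ and a state $q\in Q$ such that $\mathcal L=\{[w]\mid w\in A^*,\ c\vdash^*_{\mathcal P}(q,[w])\}$.
   Context: A dependence alphabet is $\mathcal D=(A,D)$, $A$ finite, $D\subseteq A\times A$ reflexive and symmetric. $D(a)=\{c\mid(a,c)\in D\}$, $D(w)=\bigcup_{a\text{ in }w}D(a)$. Letters $a,b$ independent if $(a,b)\notin D$; $u\parallel v$ if every letter of $u$ is independent of every letter of $v$. $\sim$ least congruence on $A^*$ with $ab\sim ba$ for independent $a,b$; $\mathbb M(\mathcal D)=A^*/{\sim}$; $[w]$ class of $w$. A trace language $\mathcal L$ is rational if $\mathcal L=[L]$ for a regular $L\subseteq A^*$. Since $D=D'\cap(A\times A)$, for $w,w'\in A^*$ we have $w\sim_{\mathcal D}w'$ iff $w\sim_{\mathcal D'}w'$, so $\mathbb M(\mathcal D)$ is identified with the submonoid of $\mathbb M(\mathcal D')$ generated by $A$, and $[w]$ for $w\in A^*$ is read in either monoid. Pushdown system over $\mathcal D'$: $\mathcal P=(Q,\Delta)$, $Q$ finite, $\Delta\subseteq Q\times A'\times A'^*\times Q$ finite; configurations $Q\times\mathbb M(\mathcal D')$; $(p,s)\vdash_{\mathcal P}(q,t)$ iff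 there are $(p,a,w,q)\in\Delta$, $x\in A'^*$ with $s=[ax]$, $t=[wx]$; $\vdash^*_{\mathcal P}$ reflexive transitive closure. Trace-pushdown system: (P1) $D'(w)\subseteq D'(a)$ for all $(p,a,w,q)\in\Delta$; (P2') whenever $(p,a,v,q),(q,b,w,r)\in\Delta$ with $av\parallel bw$ (w.r.t. $D'$) there is $q'$ with $(p,b,w,q'),(q',a,v,r)\in\Delta$. *)

theory Defs
  imports Main
begin

definition dep_alphabet :: "'a set \<Rightarrow> ('a \<times> 'a) set \<Rightarrow> bool" where
  "dep_alphabet A D \<longleftrightarrow> finite A \<and> D \<subseteq> A \<times> A \<and>
     (\<forall>a\<in>A. (a, a) \<in> D) \<and> (\<forall>a b. (a, b) \<in> D \<longrightarrow> (b, a) \<in> D)"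

definition Dof :: "('a \<times> 'a) set \<Rightarrow> 'a set \<Rightarrow> 'a set" where
  "Dof D S = {c. \<exists>a\<in>S. (a, c) \<in> D}"

definition indep_words :: "('a \<times> 'a) set \<Rightarrow> 'a list \<Rightarrow> 'a list \<Rightarrow> bool" where
  "indep_words D u v \<longleftrightarrow> (\<forall>a\<in>set u. \<forall>b\<in>set v. (a, b) \<notin> D)"

definition swap_step :: "'a set \<Rightarrow> ('a \<times> 'a) set \<Rightarrow> 'a list \<Rightarrow> 'a list \<Rightarrow> bool" where
  "swap_step A D u v \<longleftrightarrow> (\<exists>x y a b. a \<in> A \<and> b \<in> A \<and> (a, b) \<notin> D \<and>
      u = x @ [a, b] @ y \<and> v = x @ [b, a] @ y)"

definition tequiv :: "'a set \<Rightarrow> ('a \<times> 'a) set \<Rightarrow> 'a list \<Rightarrow> 'a list \<Rightarrow> bool" where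
  "tequiv A D = (swap_step A D)\<^sup>*\<^sup>*"

definition tr :: "'a set \<Rightarrow> ('a \<times> 'a) set \<Rightarrow> 'a list \<Rightarrow> 'a list set" where
  "tr A D w = {v. tequiv A D w v}"

definition nfa_accepts :: "('s \<times> 'a \<times> 's) set \<Rightarrow> 's \<Rightarrow> 's set \<Rightarrow> 'a list \<Rightarrow> bool" where
  "nfa_accepts \<delta> s0 F w \<longleftrightarrow> (\<exists>r. length r = Suc (length w) \<and> r ! 0 = s0 \<and> r ! length w \<in> F \<and>
      (\<forall>i < length w. (r ! i, w ! i, r ! Suc i) \<in> \<delta>))"

definition regular :: "'a set \<Rightarrow> 'a list set \<Rightarrow> bool" where
  "regular A L \<longleftrightarrow> L \<subseteq> lists A \<and> (\<exists>(S :: nat set) \<delta> s0 F. finite S \<and> s0 \<in> S \<and> F \<subseteq> S \<and>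
      \<delta> \<subseteq> S \<times> A \<times> S \<and> L = {w. w \<in> lists A \<and> nfa_accepts \<delta> s0 F w})"

definition rational_trace_lang :: "'a set \<Rightarrow> ('a \<times> 'a) set \<Rightarrow> 'a list set set \<Rightarrow> bool" where
  "rational_trace_lang A D \<L> \<longleftrightarrow> (\<exists>L. regular A L \<and> \<L> = tr A D ` L)"

type_synonym ('s, 'a) rule = "'s \<times> 'a \<times> 'a list \<times> 's"

definition pds :: "'a set \<Rightarrow> 's set \<Rightarrow> ('s, 'a) rule set \<Rightarrow> bool" where
  "pds A Q \<Delta> \<longleftrightarrow> finite Q \<and> finite \<Delta> \<and> \<Delta> \<subseteq> Q \<times> A \<times> lists A \<times> Q"

definition pds_step :: "'a set \<Rightarrow> ('a \<times> 'a) set \<Rightarrow> ('s, 'a) rule set \<Rightarrow>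
    ('s \<times> 'a list set) \<Rightarrow> ('s \<times> 'a list set) \<Rightarrow> bool" where
  "pds_step A D \<Delta> c c' \<longleftrightarrow> (\<exists>p a w q x. (p, a, w, q) \<in> \<Delta> \<and> x \<in> lists A \<and>
      c = (p, tr A D (a # x)) \<and> c' = (q, tr A D (w @ x)))"

definition trace_pds :: "'a set \<Rightarrow> ('a \<times> 'a) set \<Rightarrow> 's set \<Rightarrow> ('s, 'a) rule set \<Rightarrow> bool" where
  "trace_pds A D Q \<Delta> \<longleftrightarrow> pds A Q \<Delta> \<and>
     (\<forall>p a w q. (p, a, w, q) \<in> \<Delta> \<longrightarrow> Dof D (set w) \<subseteq> Dof D {a}) \<and>
     (\<forall>p a v q b w r. (p, a, v, q) \<in> \<Delta> \<and> (q, b, w, r) \<in> \<Delta> \<and> indep_words D (a # v) (b # w)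
        \<longrightarrow> (\<exists>q'. (p, b, w, q') \<in> \<Delta> \<and> (q', a, v, r) \<in> \<Delta>))"

end

theory Submission
  imports Defs
begin


lemma swap_sym:
  assumes "\<forall>a b. (a,b)\<in>D \<longrightarrow> (b,a)\<in>D" "swap_step A D u v"
  shows "swap_step A D v u"
  using assms unfolding swap_step_def by blast

lemma tequiv_sym:
  assumes "\<forall>a b. (a,b)\<in>D \<longrightarrow> (b,a)\<in>D" "tequiv A D u v"
  shows "tequiv A D v u"
  using assms(2) unfolding tequiv_def
proof (induction rule: rtranclp_induct)
  case base then show ?case by simp
next
  case (step y z)
  then show ?case using swap_sym[OF assms(1)]
    by (meson converse_rtranclp_into_rtranclp)
qed

lemma tequiv_trans: "tequiv A D u v \<Longrightarrow> tequiv A D v w \<Longrightarrow> tequiv A D u w"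
  unfolding tequiv_def by simp

lemma tequiv_refl: "tequiv A D u u"
  unfolding tequiv_def by simp

lemma tr_eq_iff:
  assumes "\<forall>a b. (a,b)\<in>D \<longrightarrow> (b,a)\<in>D"
  shows "tr A D u = tr A D v \<longleftrightarrow> tequiv A D u v"
proof
  assume "tr A D u = tr A D v"
  then have "v \<in> tr A D u" unfolding tr_def using tequiv_refl by blast
  then show "tequiv A D u v" unfolding tr_def by simp
next
  assume h: "tequiv A D u v"
  show "tr A D u = tr A D v" unfolding tr_def
    using h tequiv_sym[OF assms h] tequiv_trans by blast
qed

lemma tequiv_append_left:
  assumes "tequiv A D x y" shows "tequiv A D (w@x) (w@y)"
  using assms unfolding tequiv_def
proof (induction rule: rtranclp_induct)
  case base then show ?case by simp
next
  case (step y z)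
  have "swap_step A D (w@y) (w@z)" using step(2) unfolding swap_step_def
    by (metis append.assoc)
  then show ?case using step(3) by simp
qed

lemma head_fixed_step:
  assumes "\<forall>b\<in>A. (h,b)\<in>D" "swap_step A D (h#x) v"
  shows "\<exists>y. v = h#y \<and> swap_step A D x y"
proof -
  obtain x0 y0 a b where ab: "a \<in> A" "b \<in> A" "(a,b) \<notin> D"
    "h#x = x0 @ [a,b] @ y0" "v = x0 @ [b,a] @ y0"
    using assms(2) unfolding swap_step_def by blast
  show ?thesis
  proof (cases x0)
    case Nil
    then show ?thesis using ab assms(1) by auto
  next
    case (Cons c x1)
    then show ?thesis using ab unfolding swap_step_def by auto
  qed
qed

lemma head_fixed:
  assumes "\<forall>b\<in>A. (h,b)\<in>D" "tequiv A D (h#x) v"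
  shows "\<exists>y. v = h#y \<and> tequiv A D x y"
  using assms(2) unfolding tequiv_def
proof (induction rule: rtranclp_induct)
  case base then show ?case by simp
next
  case (step y z)
  then obtain y' where "y = h#y'" "(swap_step A D)\<^sup>*\<^sup>* x y'" by blast
  with head_fixed_step[OF assms(1)] step(2) show ?case
    by (metis rtranclp.rtrancl_into_rtrancl)
qed

lemma tequiv_Nil: "tequiv A D [] v \<Longrightarrow> v = []"
  unfolding tequiv_def
  by (induction rule: rtranclp_induct) (auto simp: swap_step_def)

lemma map_Inl_swap:
  assumes "\<forall>a b. (Inl a, Inl b) \<in> D' \<longleftrightarrow> (a,b)\<in>D" "\<forall>a. Inl a \<in> A' \<longrightarrow> a \<in> A"
    "swap_step A' D' (map Inl x) v"
  shows "\<exists>y. v = map Inl y \<and> swap_step A D x y"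
proof -
  obtain x0 y0 a b where ab: "a \<in> A'" "b \<in> A'" "(a,b) \<notin> D'"
    "map Inl x = x0 @ [a,b] @ y0" "v = x0 @ [b,a] @ y0"
    using assms(3) unfolding swap_step_def by blast
  have sub: "set (x0 @ [a,b] @ y0) \<subseteq> range Inl" using ab(4) by (metis set_map image_subset_iff rangeI)
  then obtain a' b' where a': "a = Inl a'" "b = Inl b'" by auto
  have x0: "x0 = map Inl (map projl x0)" using sub
    by (induction x0) auto
  have y0: "y0 = map Inl (map projl y0)" using sub
    by (induction y0) auto
  have x: "x = map projl x0 @ [a', b'] @ map projl y0"
    using arg_cong[OF ab(4), of "map projl"] a' by (simp add: comp_def)
  have "v = map Inl (map projl x0 @ [b', a'] @ map projl y0)"
    using ab(5) a' x0 y0 by simp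
  moreover have "swap_step A D x (map projl x0 @ [b', a'] @ map projl y0)"
    unfolding swap_step_def using x a' ab assms(1,2) by blast
  ultimately show ?thesis by blast
qed

lemma map_Inl_tequiv:
  assumes "\<forall>a b. (Inl a, Inl b) \<in> D' \<longleftrightarrow> (a,b)\<in>D" "\<forall>a. Inl a \<in> A' \<longrightarrow> a \<in> A"
    "tequiv A' D' (map Inl x) v"
  shows "\<exists>y. v = map Inl y \<and> tequiv A D x y"
  using assms(3) unfolding tequiv_def
proof (induction rule: rtranclp_induct)
  case base then show ?case by auto
next
  case (step y z)
  then obtain y' where "y = map Inl y'" "(swap_step A D)\<^sup>*\<^sup>* x y'" by blast
  with map_Inl_swap[OF assms(1,2)] step(2) show ?case
    by (metis rtranclp.rtrancl_into_rtrancl)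
qed

fun accf :: "('s \<times> 'a \<times> 's) set \<Rightarrow> 's set \<Rightarrow> 's \<Rightarrow> 'a list \<Rightarrow> bool" where
  "accf \<delta> F s [] = (s \<in> F)"
| "accf \<delta> F s (a # u) = (\<exists>s'. (s, a, s') \<in> \<delta> \<and> accf \<delta> F s' u)"

lemma nfa_accf: "nfa_accepts \<delta> s F u \<longleftrightarrow> accf \<delta> F s u"
proof (induction u arbitrary: s)
  case Nil
  show ?case unfolding nfa_accepts_def
    by (auto intro: exI[of _ "[s]"])
next
  case (Cons a u)
  show ?case
  proof
    assume "nfa_accepts \<delta> s F (a # u)"
    then obtain r where r: "length r = Suc (length (a#u))" "r ! 0 = s" "r ! length (a#u) \<in> F"
      "\<forall>i < length (a#u). (r ! i, (a#u) ! i, r ! Suc i) \<in> \<delta>"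
      unfolding nfa_accepts_def by blast
    have "nfa_accepts \<delta> (r ! 1) F u" unfolding nfa_accepts_def
      apply (rule exI[of _ "tl r"])
      using r by (auto simp: nth_tl)
    moreover have "(s, a, r ! 1) \<in> \<delta>" using r(4)[rule_format, of 0] r(2) by simp
    ultimately show "accf \<delta> F s (a # u)" using Cons by auto
  next
    assume "accf \<delta> F s (a # u)"
    then obtain s' where s': "(s, a, s') \<in> \<delta>" "accf \<delta> F s' u" by auto
    then obtain r where r: "length r = Suc (length u)" "r ! 0 = s'" "r ! length u \<in> F"
      "\<forall>i < length u. (r ! i, u ! i, r ! Suc i) \<in> \<delta>"
      using Cons unfolding nfa_accepts_def by blast
    show "nfa_accepts \<delta> s F (a # u)" unfolding nfa_accepts_def
    proof (rule exI[of _ "s # r"], intro conjI allI impI)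
      fix i assume "i < length (a # u)"
      then show "((s # r) ! i, (a # u) ! i, (s # r) ! Suc i) \<in> \<delta>"
        using r s' by (cases i) auto
    qed (use r in auto)
  qed
qed



theorem proposition6p2:
  fixes A :: "'a set" and D :: "('a \<times> 'a) set" and \<L> :: "'a list set set"
  assumes "dep_alphabet A D"
    and "rational_trace_lang A D \<L>"
  shows "\<exists>(A' :: ('a + nat) set) D' (Q :: nat set) \<Delta> c q.
     dep_alphabet A' D' \<and> Inl ` A \<subseteq> A' \<and> D = {(a, b). (Inl a, Inl b) \<in> D'} \<and>
     trace_pds A' D' Q \<Delta> \<and>
     (\<exists>p x. p \<in> Q \<and> x \<in> lists A' \<and> c = (p, tr A' D' x)) \<and> q \<in> Q \<and>
     \<L> = {tr A D w | w. w \<in> lists A \<and> (pds_step A' D' \<Delta>)\<^sup>*\<^sup>* c (q, tr A' D' (map Inl w))}"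
proof -
  obtain L0 where L0: "regular A L0" "\<L> = tr A D ` L0"
    using assms(2) unfolding rational_trace_lang_def by blast
  obtain S :: "nat set" and \<delta> s0 F where nfa: "finite S" "s0 \<in> S" "F \<subseteq> S"
    "\<delta> \<subseteq> S \<times> A \<times> S" "L0 = {w. w \<in> lists A \<and> nfa_accepts \<delta> s0 F w}"
    using L0(1) unfolding regular_def by blast
  have finA: "finite A" and DA: "D \<subseteq> A \<times> A" and reflD: "\<forall>a\<in>A. (a,a) \<in> D"
    and symD: "\<forall>a b. (a, b) \<in> D \<longrightarrow> (b, a) \<in> D"
    using assms(1) unfolding dep_alphabet_def by auto
  define h :: "'a + nat" where "h = Inr 0"
  define A' where "A' = Inl ` A \<union> {h}"
  define D' where "D' = {(Inl a, Inl b) | a b. (a,b) \<in> D} \<union> {(h,x) | x. x \<in> A'} \<union> {(x,h) | x. x \<in> A'}"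
  define Q :: "nat set" where "Q = {0,1} \<union> (\<lambda>s. s+2) ` S"
  define \<Delta>0 :: "(nat \<times> ('a+nat) \<times> ('a+nat) list \<times> nat) set" where "\<Delta>0 = (\<lambda>f. (0, h, [h], f+2)) ` F"
  define \<Delta>1 :: "(nat \<times> ('a+nat) \<times> ('a+nat) list \<times> nat) set" where "\<Delta>1 = (\<lambda>(s,a,t). (t+2, h, [h, Inl a], s+2)) ` \<delta>"
  define \<Delta>2 :: "(nat \<times> ('a+nat) \<times> ('a+nat) list \<times> nat) set" where "\<Delta>2 = {(s0+2, h, [], 1)}"
  define \<Delta> where "\<Delta> = \<Delta>0 \<union> \<Delta>1 \<union> \<Delta>2"
  define c where "c = (0::nat, tr A' D' [h])"
  have hA': "h \<in> A'" unfolding A'_def by simp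
  have inlD': "\<forall>a b. (Inl a, Inl b) \<in> D' \<longleftrightarrow> (a,b)\<in>D" unfolding D'_def h_def by auto
  have inlA': "\<forall>a. Inl a \<in> A' \<longrightarrow> a \<in> A" unfolding A'_def h_def by auto
  have symD': "\<forall>a b. (a, b) \<in> D' \<longrightarrow> (b, a) \<in> D'" unfolding D'_def using symD by auto
  have hD': "\<forall>b\<in>A'. (h,b) \<in> D'" unfolding D'_def by auto
  have D'A': "D' \<subseteq> A' \<times> A'" unfolding D'_def A'_def using DA by auto
  have dep: "dep_alphabet A' D'"
    unfolding dep_alphabet_def
  proof (intro conjI)
    show "finite A'" unfolding A'_def using finA by simp
    show "\<forall>a\<in>A'. (a, a) \<in> D'" unfolding D'_def A'_def using reflD by auto
  qed (use D'A' symD' in auto)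
  have finF: "finite F" using nfa finite_subset by blast
  have findelta: "finite \<delta>" using nfa(1,4) finA by (meson finite_SigmaI finite_subset)
  have tp: "trace_pds A' D' Q \<Delta>"
    unfolding trace_pds_def pds_def
  proof (intro conjI)
    show "finite Q" unfolding Q_def using nfa(1) by simp
    show "finite \<Delta>" unfolding \<Delta>_def \<Delta>0_def \<Delta>1_def \<Delta>2_def using finF findelta by simp
    show "\<Delta> \<subseteq> Q \<times> A' \<times> lists A' \<times> Q"
      unfolding \<Delta>_def \<Delta>0_def \<Delta>1_def \<Delta>2_def Q_def using nfa(2,3,4) hA' unfolding A'_def by auto
    show "\<forall>p a w q. (p, a, w, q) \<in> \<Delta> \<longrightarrow> Dof D' (set w) \<subseteq> Dof D' {a}"
    proof (intro allI impI)
      fix p a w q assume "(p, a, w, q) \<in> \<Delta>"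
      then have "a = h" unfolding \<Delta>_def \<Delta>0_def \<Delta>1_def \<Delta>2_def by auto
      then show "Dof D' (set w) \<subseteq> Dof D' {a}" unfolding Dof_def using D'A' hD' by auto
    qed
    show "\<forall>p a v q b w r. (p, a, v, q) \<in> \<Delta> \<and> (q, b, w, r) \<in> \<Delta> \<and> indep_words D' (a # v) (b # w)
        \<longrightarrow> (\<exists>q'. (p, b, w, q') \<in> \<Delta> \<and> (q', a, v, r) \<in> \<Delta>)"
    proof (intro allI impI)
      fix p a v q b w r assume as: "(p, a, v, q) \<in> \<Delta> \<and> (q, b, w, r) \<in> \<Delta> \<and> indep_words D' (a # v) (b # w)"
      then have "a = h" "b = h" unfolding \<Delta>_def \<Delta>0_def \<Delta>1_def \<Delta>2_def by auto
      then show "\<exists>q'. (p, b, w, q') \<in> \<Delta> \<and> (q', a, v, r) \<in> \<Delta>"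
        using as hD' hA' unfolding indep_words_def by auto
    qed
  qed
  have step: "(pds_step A' D' \<Delta>)\<^sup>*\<^sup>* c (q', tr A' D' (w @ x))"
    if "(pds_step A' D' \<Delta>)\<^sup>*\<^sup>* c (p, tr A' D' (a # x))" "(p, a, w, q') \<in> \<Delta>" "x \<in> lists A'"
    for p a w q' x
    using that unfolding pds_step_def
    by (smt (verit, best) rtranclp.rtrancl_into_rtrancl)
  have fwd: "accf \<delta> F s u \<Longrightarrow> u \<in> lists A \<Longrightarrow> (pds_step A' D' \<Delta>)\<^sup>*\<^sup>* c (s+2, tr A' D' (h # map Inl u))" for s u
  proof (induction u arbitrary: s)
    case Nil
    have "(0, h, [h], s+2) \<in> \<Delta>" using Nil unfolding \<Delta>_def \<Delta>0_def by auto
    from step[of 0 h "[]", OF _ this] show ?case unfolding c_def by simp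
  next
    case (Cons a u)
    then obtain s' where s': "(s, a, s') \<in> \<delta>" "accf \<delta> F s' u" by auto
    have r: "(s'+2, h, [h, Inl a], s+2) \<in> \<Delta>" using s' unfolding \<Delta>_def \<Delta>1_def by force
    have "map Inl u \<in> lists A'" using Cons(3) unfolding A'_def by auto
    from step[OF Cons(1)[OF s'(2)] r this] Cons(3) show ?case by simp
  qed
  have fin: "accf \<delta> F s0 u \<Longrightarrow> u \<in> lists A \<Longrightarrow> (pds_step A' D' \<Delta>)\<^sup>*\<^sup>* c (1, tr A' D' (map Inl u))" for u
  proof -
    assume a: "accf \<delta> F s0 u" "u \<in> lists A"
    have r: "(s0+2, h, [], 1) \<in> \<Delta>" unfolding \<Delta>_def \<Delta>2_def by simp
    have "map Inl u \<in> lists A'" using a(2) unfolding A'_def by auto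
    from step[OF fwd[OF a] r this] show ?thesis by simp
  qed
  define Inv where "Inv = (\<lambda>(p::nat, T). (p = 0 \<and> T = tr A' D' [h]) \<or>
      (\<exists>s u. p = s+2 \<and> u \<in> lists A \<and> accf \<delta> F s u \<and> T = tr A' D' (h # map Inl u)) \<or>
      (p = 1 \<and> (\<exists>u. u \<in> lists A \<and> accf \<delta> F s0 u \<and> T = tr A' D' (map Inl u))))"
  have trI: "tr A' D' u = tr A' D' v \<longleftrightarrow> tequiv A' D' u v" for u v
    using tr_eq_iff[OF symD'] .
  have inv: "Inv c'" if "(pds_step A' D' \<Delta>)\<^sup>*\<^sup>* c c'" for c'
    using that
  proof (induction rule: rtranclp_induct)
    case base then show ?case unfolding Inv_def c_def by simp
  next
    case (step y z)
    obtain p T p' T' where yz: "y = (p,T)" "z = (p',T')" by fastforce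
    obtain a w x where r: "(p, a, w, p') \<in> \<Delta>" "x \<in> lists A'" "T = tr A' D' (a # x)" "T' = tr A' D' (w @ x)"
      using step(2) unfolding yz pds_step_def by blast
    have I: "Inv (p,T)" using step(3) yz by simp
    consider (d0) f where "f \<in> F" "p = 0" "a = h" "w = [h]" "p' = f+2"
      | (d1) s b t where "(s,b,t) \<in> \<delta>" "p = t+2" "a = h" "w = [h, Inl b]" "p' = s+2"
      | (d2) "p = s0+2" "a = h" "w = []" "p' = 1"
      using r(1) unfolding \<Delta>_def \<Delta>0_def \<Delta>1_def \<Delta>2_def by auto
    then show ?case
    proof cases
      case d0
      then have "T = tr A' D' [h]" using I unfolding Inv_def by auto
      then have "tr A' D' (h # []) = tr A' D' (h # x)" using r(3) d0 by simp
      then have "tequiv A' D' (h # []) (h # x)" using trI by blast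
      then obtain y where "h # x = h # y" "tequiv A' D' [] y" using head_fixed[OF hD'] by blast
      then have "x = []" using tequiv_Nil by blast
      then show ?thesis unfolding yz Inv_def using d0 r(4) by (auto intro!: exI[of _ "[]"])
    next
      case d1
      then obtain u where u: "u \<in> lists A" "accf \<delta> F t u" "T = tr A' D' (h # map Inl u)"
        using I unfolding Inv_def by auto
      then have "tr A' D' (h # map Inl u) = tr A' D' (h # x)" using r(3) d1 by simp
      then have "tequiv A' D' (h # map Inl u) (h # x)" using trI by blast
      then obtain y where "h # x = h # y" "tequiv A' D' (map Inl u) y" using head_fixed[OF hD'] by blast
      then have "tequiv A' D' (w @ x) (w @ map Inl u)"
        using tequiv_append_left tequiv_sym[OF symD'] by blast
      then have "tr A' D' (w @ x) = tr A' D' (h # map Inl (b # u))" using trI d1 by simp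
      then have "T' = tr A' D' (h # map Inl (b # u))" using r(4) by simp
      moreover have "b # u \<in> lists A" "accf \<delta> F s (b # u)" using d1 u nfa(4) by auto
      ultimately have "\<exists>s u. p' = s+2 \<and> u \<in> lists A \<and> accf \<delta> F s u \<and> T' = tr A' D' (h # map Inl u)"
        using d1(5) by blast
      then show ?thesis unfolding yz Inv_def by simp
    next
      case d2
      then obtain u where u: "u \<in> lists A" "accf \<delta> F s0 u" "T = tr A' D' (h # map Inl u)"
        using I unfolding Inv_def by auto
      then have "tr A' D' (h # map Inl u) = tr A' D' (h # x)" using r(3) d2 by simp
      then have "tequiv A' D' (h # map Inl u) (h # x)" using trI by blast
      then obtain y where "h # x = h # y" "tequiv A' D' (map Inl u) y" using head_fixed[OF hD'] by blast
      then have "tr A' D' x = tr A' D' (map Inl u)" using trI tequiv_sym[OF symD'] by blast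
      then have "T' = tr A' D' (map Inl u)" using r(4) d2 by simp
      then have "p' = 1 \<and> (\<exists>u. u \<in> lists A \<and> accf \<delta> F s0 u \<and> T' = tr A' D' (map Inl u))"
        using d2(4) u by blast
      then show ?thesis unfolding yz Inv_def by simp
    qed
  qed
  have Leq: "\<L> = {tr A D w | w. w \<in> lists A \<and> (pds_step A' D' \<Delta>)\<^sup>*\<^sup>* c (1, tr A' D' (map Inl w))}"
  proof (intro set_eqI iffI)
    fix T assume "T \<in> \<L>"
    then obtain u where u0: "T = tr A D u" "u \<in> L0" using L0(2) by blast
    then have u: "T = tr A D u" "u \<in> lists A" "accf \<delta> F s0 u"
      using nfa(5) nfa_accf[of \<delta> s0 F u] by auto
    then show "T \<in> {tr A D w | w. w \<in> lists A \<and> (pds_step A' D' \<Delta>)\<^sup>*\<^sup>* c (1, tr A' D' (map Inl w))}"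
      using fin by blast
  next
    fix T assume "T \<in> {tr A D w | w. w \<in> lists A \<and> (pds_step A' D' \<Delta>)\<^sup>*\<^sup>* c (1, tr A' D' (map Inl w))}"
    then obtain w where w: "T = tr A D w" "w \<in> lists A" "(pds_step A' D' \<Delta>)\<^sup>*\<^sup>* c (1, tr A' D' (map Inl w))"
      by blast
    have "Inv (1, tr A' D' (map Inl w))" by (rule inv[OF w(3)])
    then have "\<exists>u. u \<in> lists A \<and> accf \<delta> F s0 u \<and> tr A' D' (map Inl w) = tr A' D' (map Inl u)"
      unfolding Inv_def by simp
    then obtain u where u: "u \<in> lists A" "accf \<delta> F s0 u" "tr A' D' (map Inl w) = tr A' D' (map Inl u)"
      by blast
    then have "tequiv A' D' (map Inl u) (map Inl w)" using trI tequiv_sym[OF symD'] by blast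
    then obtain y where "map Inl w = (map Inl y :: ('a+nat) list)" "tequiv A D u y"
      using map_Inl_tequiv[OF inlD' inlA'] by blast
    then have "tequiv A D u w" using map_injective[OF _ inj_Inl] by metis
    then have "T = tr A D u" using w(1) tr_eq_iff[OF symD] tequiv_sym[OF symD] by metis
    moreover have "u \<in> L0" using u nfa(5) nfa_accf[of \<delta> s0 F u] by simp
    ultimately show "T \<in> \<L>" using L0(2) by blast
  qed
  show ?thesis
  proof (rule exI[of _ A'], rule exI[of _ D'], rule exI[of _ Q], rule exI[of _ \<Delta>], rule exI[of _ c],
      rule exI[of _ 1], intro conjI)
    show "dep_alphabet A' D'" by (rule dep)
    show "Inl ` A \<subseteq> A'" unfolding A'_def by auto
    show "D = {(a, b). (Inl a, Inl b) \<in> D'}" using inlD' by auto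
    show "trace_pds A' D' Q \<Delta>" by (rule tp)
    show "\<exists>p x. p \<in> Q \<and> x \<in> lists A' \<and> c = (p, tr A' D' x)"
      unfolding c_def Q_def using hA' by (intro exI[of _ 0] exI[of _ "[h]"]) auto
    show "(1::nat) \<in> Q" unfolding Q_def by simp
  qed (rule Leq)
qed

end
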